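(* Let $k>0$ and $H_n(x,y,u;k)=\sum_{w\in B_n}x^{\mathrm{exc}(w)}y^{\mathrm{aexc}(w)}u^{\mathrm{fix}(w)}k^{n-\mathrm{cyc}(w)}$ (with $H_0=1$). Then $$\sum_{n\ge0}H_n(x,y,u;k)\frac{z^n}{n!}=\left(\frac{(y-x)e^{kz(y+u-2x)}}{y-xe^{2kz(y-x)}}\right)^{1/k}.$$
   Context: $B_n$ is the hyperoctahedral group of signed permutations $w$ of $\pm[n]$ with $w(-i)=-w(i)$, written in standard cycle decomposition (each cycle starts with its element of largest absolute value, cycles ordered by increasing absolute value of first elements); $\mathrm{cyc}(w)$ is the number of cycles. For $i\in[n]$: $i$ is an excedance if $w(|w(i)|)>w(i)$; an anti-excedance if $w(i)=-i$ or $w(|w(i)|)<w(i)$; a fixed point if $w(i)=i$. $\mathrm{exc}(w)$, $\mathrm{aexc}(w)$, $\mathrm{fix}(w)$ denote their numbers. *)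

theory Defs
  imports "HOL-Combinatorics.Permutations" Complex_Main
begin

definition signed_perms :: "nat \<Rightarrow> (int \<Rightarrow> int) set" where
  "signed_perms n = {w. w permutes ({- int n..int n} - {0}) \<and> (\<forall>i. w (- i) = - w i)}"

definition exc :: "nat \<Rightarrow> (int \<Rightarrow> int) \<Rightarrow> nat" where
  "exc n w = card {i \<in> {1..int n}. w \<bar>w i\<bar> > w i}"

definition aexc :: "nat \<Rightarrow> (int \<Rightarrow> int) \<Rightarrow> nat" where
  "aexc n w = card {i \<in> {1..int n}. w i = - i \<or> w \<bar>w i\<bar> < w i}"

definition fixp :: "nat \<Rightarrow> (int \<Rightarrow> int) \<Rightarrow> nat" where
  "fixp n w = card {i \<in> {1..int n}. w i = i}"

text \<open>Number of cycles in the (standard) cycle decomposition: a cycle is the orbit of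
  some \<open>i \<in> [n]\<close> under \<open>w\<close>, considered up to signs of its entries.\<close>
definition cyc :: "nat \<Rightarrow> (int \<Rightarrow> int) \<Rightarrow> nat" where
  "cyc n w = card ((\<lambda>i. abs ` {(w ^^ m) i | m. True}) ` {1..int n})"

definition H :: "nat \<Rightarrow> real \<Rightarrow> real \<Rightarrow> real \<Rightarrow> real \<Rightarrow> real" where
  "H n x y u k = (\<Sum>w\<in>signed_perms n.
      x ^ exc n w * y ^ aexc n w * u ^ fixp n w * k ^ (n - cyc n w))"

end

theory Submission
  imports Defs "HOL-Combinatorics.Cycles" "HOL-Analysis.Infinite_Sum" "HOL-Analysis.Generalised_Binomial_Theorem"
begin


abbreviation SS :: "nat \<Rightarrow> int set" where "SS n \<equiv> {- int n..int n} - {0}"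

lemma sp_perm: "w \<in> signed_perms n \<Longrightarrow> w permutes SS n" by (simp add: signed_perms_def)
lemma sp_odd: "w \<in> signed_perms n \<Longrightarrow> w (- i) = - w i" by (simp add: signed_perms_def)
lemma sp_zero: "w \<in> signed_perms n \<Longrightarrow> w 0 = 0" using sp_odd[of w n 0] by simp
lemma sp_out: "w \<in> signed_perms n \<Longrightarrow> \<bar>i\<bar> > int n \<Longrightarrow> w i = i"
  by (rule permutes_not_in[OF sp_perm]) auto
lemma sp_inj: "w \<in> signed_perms n \<Longrightarrow> inj w" using permutes_inj[OF sp_perm] by blast
lemma sp_abs: "w \<in> signed_perms n \<Longrightarrow> \<bar>w \<bar>i\<bar>\<bar> = \<bar>w i\<bar>"
proof (cases "i \<ge> 0")
  case False
  assume w: "w \<in> signed_perms n"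
  from False have "\<bar>i\<bar> = - i" by simp
  then show ?thesis using sp_odd[OF w, of i] by simp
qed simp
lemma sp_range: "w \<in> signed_perms n \<Longrightarrow> i \<in> {1..int n} \<Longrightarrow> 1 \<le> \<bar>w i\<bar> \<and> \<bar>w i\<bar> \<le> int n"
proof -
  assume w: "w \<in> signed_perms n" and i: "i \<in> {1..int n}"
  have "i \<in> SS n" using i by auto
  then have "w i \<in> SS n" using permutes_in_image[OF sp_perm[OF w]] by blast
  then show ?thesis by auto
qed
lemma sp_abs_eq: "w \<in> signed_perms n \<Longrightarrow> \<bar>w i\<bar> = \<bar>w j\<bar> \<Longrightarrow> \<bar>i\<bar> = \<bar>j\<bar>"
proof -
  assume w: "w \<in> signed_perms n" and e: "\<bar>w i\<bar> = \<bar>w j\<bar>"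
  then have "w i = w j \<or> w i = - w j" by arith
  then have "w i = w j \<or> w i = w (- j)" using sp_odd[OF w, of j] by simp
  then have "i = j \<or> i = - j" using sp_inj[OF w] unfolding inj_def by blast
  then show ?thesis by auto
qed

definition wt :: "real \<Rightarrow> real \<Rightarrow> real \<Rightarrow> (int \<Rightarrow> int) \<Rightarrow> int \<Rightarrow> real" where
  "wt x y u w i = (if w \<bar>w i\<bar> > w i then x else if w i = - i \<or> w \<bar>w i\<bar> < w i then y else u)"

definition PW :: "nat \<Rightarrow> real \<Rightarrow> real \<Rightarrow> real \<Rightarrow> (int \<Rightarrow> int) \<Rightarrow> real" where
  "PW n x y u w = (\<Prod>i\<in>{1..int n}. wt x y u w i)"

lemma st_fix:
  assumes w: "w \<in> signed_perms n" and i: "i \<in> {1..int n}"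
  shows "(\<not> w \<bar>w i\<bar> > w i \<and> \<not> (w i = - i \<or> w \<bar>w i\<bar> < w i)) \<longleftrightarrow> w i = i"
proof
  assume h: "\<not> w \<bar>w i\<bar> > w i \<and> \<not> (w i = - i \<or> w \<bar>w i\<bar> < w i)"
  then have "w \<bar>w i\<bar> = w i" by auto
  then have "\<bar>w i\<bar> = i" using sp_inj[OF w] unfolding inj_def by blast
  then show "w i = i" using h by arith
next
  assume "w i = i" then show "\<not> w \<bar>w i\<bar> > w i \<and> \<not> (w i = - i \<or> w \<bar>w i\<bar> < w i)"
    using i by auto
qed

lemma st_ex_ax:
  assumes w: "w \<in> signed_perms n"
  shows "w \<bar>w i\<bar> > w i \<Longrightarrow> \<not> (w i = - i \<or> w \<bar>w i\<bar> < w i)"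
proof -
  assume h: "w \<bar>w i\<bar> > w i"
  show ?thesis
  proof
    assume "w i = - i \<or> w \<bar>w i\<bar> < w i"
    moreover have "w i = - i \<Longrightarrow> False"
    proof -
      assume e: "w i = - i"
      then have a: "w \<bar>w i\<bar> = w \<bar>i\<bar>" by simp
      show False
      proof (cases "i \<ge> 0")
        case True then show False using h a by simp
      next
        case False
        then have "w \<bar>i\<bar> = i" using e sp_odd[OF w, of i] by simp
        then show False using h a e False by simp
      qed
    qed
    ultimately show False using h by auto
  qed
qed

lemma PW_eq:
  assumes w: "w \<in> signed_perms n"
  shows "x ^ exc n w * y ^ aexc n w * u ^ fixp n w = PW n x y u w"
proof -
  let ?I = "{1..int n}"
  let ?E = "{i. w \<bar>w i\<bar> > w i}" and ?A = "{i. w i = - i \<or> w \<bar>w i\<bar> < w i}"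
  have "PW n x y u w = (\<Prod>i\<in>?I \<inter> ?E. x) * (\<Prod>i\<in>?I \<inter> - ?E. if w i = - i \<or> w \<bar>w i\<bar> < w i then y else u)"
    unfolding PW_def wt_def by (rule prod.If_cases) simp
  also have "(\<Prod>i\<in>?I \<inter> - ?E. if w i = - i \<or> w \<bar>w i\<bar> < w i then y else u)
      = (\<Prod>i\<in>?I \<inter> - ?E \<inter> ?A. y) * (\<Prod>i\<in>?I \<inter> - ?E \<inter> - ?A. u)"
    by (rule prod.If_cases) simp
  also have "?I \<inter> ?E = {i \<in> ?I. w \<bar>w i\<bar> > w i}" by auto
  also have "?I \<inter> - ?E \<inter> ?A = {i \<in> ?I. w i = - i \<or> w \<bar>w i\<bar> < w i}"
    using st_ex_ax[OF w] by auto
  also have "?I \<inter> - ?E \<inter> - ?A = {i \<in> ?I. w i = i}"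
    using st_fix[OF w] by blast
  finally show ?thesis by (simp add: exc_def aexc_def fixp_def)
qed

lemma H_PW: "H n x y u k = (\<Sum>w\<in>signed_perms n. k ^ (n - cyc n w) * PW n x y u w)"
  unfolding H_def by (rule sum.cong) (auto simp: PW_eq[symmetric])

definition orb :: "(int \<Rightarrow> int) \<Rightarrow> int \<Rightarrow> int set" where
  "orb f i = range (\<lambda>m. (f ^^ m) i)"

lemma abs_funpow: assumes w: "w \<in> signed_perms n"
  shows "\<bar>(w ^^ m) i\<bar> = ((\<lambda>j. \<bar>w j\<bar>) ^^ m) \<bar>i\<bar>"
proof (induction m)
  case (Suc m)
  then show ?case using sp_abs[OF w, of "(w^^m) i"] by simp
qed simp

lemma cyc_alt: assumes w: "w \<in> signed_perms n"
  shows "cyc n w = card ((\<lambda>i. orb (\<lambda>j. \<bar>w j\<bar>) i) ` {1..int n})"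
proof -
  have e: "abs ` {(w ^^ m) i | m. True} = orb (\<lambda>j. \<bar>w j\<bar>) i" if i: "i \<in> {1..int n}" for i
  proof -
    have "{(w ^^ m) i | m. True} = range (\<lambda>m. (w ^^ m) i)" by auto
    then have "abs ` {(w ^^ m) i | m. True} = range (\<lambda>m. \<bar>(w ^^ m) i\<bar>)" by auto
    also have "\<dots> = range (\<lambda>m. ((\<lambda>j. \<bar>w j\<bar>) ^^ m) i)"
      using abs_funpow[OF w, of _ i] i by simp
    finally show ?thesis unfolding orb_def .
  qed
  have "(\<lambda>i. abs ` {(w ^^ m) i | m. True}) ` {1..int n} = (\<lambda>i. orb (\<lambda>j. \<bar>w j\<bar>) i) ` {1..int n}"
    by (rule image_cong[OF refl e])
  then show ?thesis unfolding cyc_def by simp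
qed


definition ins :: "nat \<Rightarrow> (int \<Rightarrow> int) \<Rightarrow> bool \<Rightarrow> int \<Rightarrow> int \<Rightarrow> int" where
  "ins n w e p = w \<circ> (if e then id else Transposition.transpose (int n + 1) (- (int n + 1)))
      \<circ> (Transposition.transpose p (int n + 1) \<circ> Transposition.transpose (- p) (- (int n + 1)))"

lemma sp_N: "w \<in> signed_perms n \<Longrightarrow> w (int n + 1) = int n + 1"
  by (rule sp_out) auto
lemma sp_mN: "w \<in> signed_perms n \<Longrightarrow> w (- (int n + 1)) = - (int n + 1)"
  by (rule sp_out) auto

lemma ins_apply:
  assumes w: "w \<in> signed_perms n" and p: "p \<in> {1..int n + 1}"
  shows "ins n w e p i = (if i = p then (if e then int n + 1 else - (int n + 1))
     else if i = - p then (if e then - (int n + 1) else int n + 1)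
     else if i = int n + 1 then w p else if i = - (int n + 1) then - w p else w i)"
  using p sp_N[OF w] sp_mN[OF w] sp_odd[OF w, of p]
  unfolding ins_def Transposition.transpose_def by (auto simp: split: if_splits)

lemma sp_mono: "w \<in> signed_perms n \<Longrightarrow> w \<in> signed_perms (Suc n)"
  unfolding signed_perms_def by (auto elim: permutes_subset)

lemma ins_sp:
  assumes w: "w \<in> signed_perms n" and p: "p \<in> {1..int n + 1}"
  shows "ins n w e p \<in> signed_perms (Suc n)"
proof -
  have a: "w permutes SS (Suc n)" using sp_perm[OF sp_mono[OF w]] .
  have b: "(if e then id else Transposition.transpose (int n + 1) (- (int n + 1))) permutes SS (Suc n)"
    by (auto intro!: permutes_swap_id permutes_id)
  have c: "(Transposition.transpose p (int n + 1) \<circ> Transposition.transpose (- p) (- (int n + 1))) permutes SS (Suc n)"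
    using p by (auto intro!: permutes_swap_id permutes_compose)
  have "ins n w e p permutes SS (Suc n)"
    unfolding ins_def by (intro permutes_compose a b c)
  moreover have "ins n w e p (- i) = - ins n w e p i" for i
    using p sp_odd[OF w, of i] unfolding ins_apply[OF w p] by auto
  ultimately show ?thesis unfolding signed_perms_def by auto
qed


lemma ins_inj0:
  assumes w1: "w1 \<in> signed_perms n" and w2: "w2 \<in> signed_perms n"
    and p1: "p1 \<in> {1..int n + 1}" and p2: "p2 \<in> {1..int n + 1}"
    and eq: "ins n w1 e1 p1 = ins n w2 e2 p2"
  shows "w1 = w2 \<and> e1 = e2 \<and> p1 = p2"
proof -
  note A1 = ins_apply[OF w1 p1] and A2 = ins_apply[OF w2 p2]
  have pp: "p1 = p2"
  proof (rule ccontr)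
    assume ne: "p1 \<noteq> p2"
    have v2: "\<bar>ins n w2 e2 p2 p2\<bar> = int n + 1" using A2 by simp
    have "\<bar>ins n w1 e1 p1 p2\<bar> \<le> int n"
    proof (cases "p2 = int n + 1")
      case True
      then have "p1 \<in> {1..int n}" using p1 ne by auto
      then show ?thesis using A1[where i=p2] True ne sp_range[OF w1, of p1] by auto
    next
      case False
      then have "p2 \<in> {1..int n}" using p2 by auto
      then show ?thesis using A1[where i=p2] False ne p1 sp_range[OF w1, of p2] by auto
    qed
    then show False using eq v2 by simp
  qed
  have ee: "e1 = e2"
    using fun_cong[OF eq, of p1] A1[where i=p1] A2[where i=p1] pp by (auto split: if_splits)
  have "w1 i = w2 i" for i
  proof -
    consider "i = p1" | "i = - p1" | "i = int n + 1" | "i = - (int n + 1)"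
      | "i \<noteq> p1 \<and> i \<noteq> - p1 \<and> i \<noteq> int n + 1 \<and> i \<noteq> - (int n + 1)" by blast
    then show ?thesis
    proof cases
      case 1
      then show ?thesis using fun_cong[OF eq, of "int n + 1"] A1[where i="int n + 1"] A2[where i="int n + 1"] pp p1 sp_N[OF w1] sp_N[OF w2]
        by (auto split: if_splits)
    next
      case 2
      then show ?thesis using fun_cong[OF eq, of "- (int n + 1)"] A1[where i="- (int n + 1)"] A2[where i="- (int n + 1)"] pp p1 sp_N[OF w1] sp_N[OF w2] sp_mN[OF w1] sp_mN[OF w2]
        sp_odd[OF w1, of p1] sp_odd[OF w2, of p1]
        by (auto split: if_splits)
    next
      case 3 then show ?thesis using sp_N[OF w1] sp_N[OF w2] by simp
    next
      case 4 then show ?thesis using sp_mN[OF w1] sp_mN[OF w2] by simp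
    next
      case 5 then show ?thesis using fun_cong[OF eq, of i] A1[where i=i] A2[where i=i] pp by simp
    qed
  qed
  then show "w1 = w2 \<and> e1 = e2 \<and> p1 = p2" using ee pp by auto
qed

lemma ins_inj: "inj_on (\<lambda>(w, e, p). ins n w e p) (signed_perms n \<times> UNIV \<times> {1..int n + 1})"
proof (rule inj_onI)
  fix a b
  assume a: "a \<in> signed_perms n \<times> UNIV \<times> {1..int n + 1}" and b: "b \<in> signed_perms n \<times> UNIV \<times> {1..int n + 1}"
    and e: "(\<lambda>(w, e, p). ins n w e p) a = (\<lambda>(w, e, p). ins n w e p) b"
  obtain w1 e1 p1 where a': "a = (w1, e1, p1)" by (cases a) auto
  obtain w2 e2 p2 where b': "b = (w2, e2, p2)" by (cases b) auto
  show "a = b" using ins_inj0[of w1 n w2 p1 p2 e1 e2] a b e unfolding a' b' by simp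
qed


lemma ins_surj:
  assumes v: "v \<in> signed_perms (Suc n)"
  shows "v \<in> (\<lambda>(w, e, p). ins n w e p) ` (signed_perms n \<times> UNIV \<times> {1..int n + 1})"
proof -
  define N where "N = int n + 1"
  have vperm: "v permutes SS (Suc n)" using sp_perm[OF v] .
  obtain i where vi: "v i = N" using permutes_surj[OF vperm] by (metis surj_def)
  have i0: "i \<noteq> 0" using vi sp_zero[OF v] N_def by auto
  have iS: "\<bar>i\<bar> \<le> N"
  proof (cases "i = N")
    case False
    then have "v i \<noteq> i" using vi by simp
    then have "i \<in> SS (Suc n)" using permutes_not_in[OF vperm] by blast
    then show ?thesis unfolding N_def by auto
  qed (simp add: N_def)
  define p where "p = \<bar>i\<bar>"
  define e where "e = (i > 0)"
  have p: "p \<in> {1..N}" using i0 iS unfolding p_def by auto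
  have vp: "v p = (if e then N else - N)"
    using vi sp_odd[OF v, of i] i0 unfolding p_def e_def by (auto simp: abs_if)
  have vmp: "v (- p) = (if e then - N else N)" using vp sp_odd[OF v, of p] by simp
  have pN: "p \<noteq> - N" "- p \<noteq> N" using p N_def by auto
  define w where "w = v \<circ> (Transposition.transpose p N \<circ> Transposition.transpose (- p) (- N)) \<circ> (if e then id else Transposition.transpose N (- N))"
  have Npos: "N > 0" "N \<noteq> - N" using N_def by auto
  have tN: "(Transposition.transpose p N \<circ> Transposition.transpose (- p) (- N)) N = p"
    using pN Npos by (simp add: Transposition.transpose_def)
  have tmN: "(Transposition.transpose p N \<circ> Transposition.transpose (- p) (- N)) (- N) = - p"
    using pN Npos p by (simp add: Transposition.transpose_def)
  have wN: "w N = N"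
  proof (cases e)
    case True then show ?thesis using tN vp unfolding w_def by simp
  next
    case False then show ?thesis using tmN vmp Npos unfolding w_def by (simp add: Transposition.transpose_def)
  qed
  have wmN: "w (- N) = - N"
  proof (cases e)
    case True then show ?thesis using tmN vmp unfolding w_def by simp
  next
    case False then show ?thesis using tN vp Npos unfolding w_def by (simp add: Transposition.transpose_def)
  qed
  have wodd: "w (- j) = - w j" for j
    using sp_odd[OF v, of j] sp_odd[OF v, of p] sp_odd[OF v, of N] pN Npos p
    unfolding w_def Transposition.transpose_def by (auto split: if_splits)
  have NS: "N \<in> SS (Suc n)" "- N \<in> SS (Suc n)" "p \<in> SS (Suc n)" "- p \<in> SS (Suc n)"
    using p N_def by auto
  have t1: "(Transposition.transpose p N \<circ> Transposition.transpose (- p) (- N)) permutes SS (Suc n)"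
    by (intro permutes_compose permutes_swap_id NS)
  have t2: "(if e then id else Transposition.transpose N (- N)) permutes SS (Suc n)"
    using permutes_swap_id[OF NS(1) NS(2)] by (cases e) (simp_all only: if_True if_False permutes_id)
  have w1: "w permutes SS (Suc n)" unfolding w_def
    by (intro permutes_compose t1 t2 vperm)
  have "w permutes SS n"
  proof (rule permutes_superset[OF w1])
    fix j assume "j \<in> SS (Suc n) - SS n"
    then have "j = N \<or> j = - N" unfolding N_def by auto
    then show "w j = j" using wN wmN by auto
  qed
  then have w: "w \<in> signed_perms n" unfolding signed_perms_def using wodd by auto
  have p': "p \<in> {1..int n + 1}" using p N_def by simp
  have "ins n w e p = v"
  proof
    fix j
    show "ins n w e p j = v j"
      unfolding ins_apply[OF w p'] using vp vmp N_def pN sp_odd[OF v, of p] sp_odd[OF v, of N]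
      unfolding w_def Transposition.transpose_def
      by (auto split: if_splits)
  qed
  then show ?thesis using w p' by force
qed

lemma ins_image: "(\<lambda>(w, e, p). ins n w e p) ` (signed_perms n \<times> UNIV \<times> {1..int n + 1}) = signed_perms (Suc n)"
  using ins_surj ins_sp by fastforce


lemma wt_same: "v i = w i \<Longrightarrow> v \<bar>w i\<bar> = w \<bar>w i\<bar> \<Longrightarrow> wt x y u v i = wt x y u w i"
  unfolding wt_def by simp

lemma Icc_Suc: "{1..int (Suc n)} = insert (int n + 1) {1..int n}" by auto

lemma PW_insN:
  assumes w: "w \<in> signed_perms n"
  shows "PW (Suc n) x y u (ins n w e (int n + 1)) = (if e then u else y) * PW n x y u w"
proof -
  let ?v = "ins n w e (int n + 1)"
  have p: "int n + 1 \<in> {1..int n + 1}" by simp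
  note A = ins_apply[OF w p]
  have same: "wt x y u ?v i = wt x y u w i" if i: "i \<in> {1..int n}" for i
  proof (rule wt_same)
    show "?v i = w i" using A[where i=i] i by auto
    show "?v \<bar>w i\<bar> = w \<bar>w i\<bar>" using A[where i="\<bar>w i\<bar>"] sp_range[OF w i] by auto
  qed
  have last: "wt x y u ?v (int n + 1) = (if e then u else y)"
  proof -
    obtain N where N: "N = int n + 1" by simp
    have vN: "?v N = (if e then N else - N)" using A[where i="int n + 1"] N by simp
    have aN: "\<bar>N\<bar> = N" "\<bar>- N\<bar> = N" "N > 0" using N by auto
    have "wt x y u ?v N = (if e then u else y)"
      using vN aN unfolding wt_def by (cases e) simp_all
    then show ?thesis using N by simp
  qed
  have "PW (Suc n) x y u ?v = wt x y u ?v (int n + 1) * (\<Prod>i\<in>{1..int n}. wt x y u ?v i)"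
    unfolding PW_def Icc_Suc by (subst prod.insert) auto
  also have "(\<Prod>i\<in>{1..int n}. wt x y u ?v i) = PW n x y u w"
    unfolding PW_def using same by (rule prod.cong[OF refl])
  finally show ?thesis using last by simp
qed

lemma PW_ins:
  assumes w: "w \<in> signed_perms n" and j: "j \<in> {1..int n}"
  shows "PW (Suc n) x y u (ins n w e \<bar>w j\<bar>) = x * y * (\<Prod>i\<in>{1..int n} - {j}. wt x y u w i)"
proof -
  define p where "p = \<bar>w j\<bar>"
  obtain N where N: "N = int n + 1" by simp
  let ?v = "ins n w e p"
  have pr: "1 \<le> p \<and> p \<le> int n" using sp_range[OF w j] p_def by simp
  then have p: "p \<in> {1..int n + 1}" by simp
  have A: "?v i = (if i = p then (if e then N else - N) else if i = - p then (if e then - N else N)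
     else if i = N then w p else if i = - N then - w p else w i)" for i
    using ins_apply[OF w p, of e i] N by simp
  have Ngt: "N > int n" using N by simp
  have aN: "\<bar>N\<bar> = N" "\<bar>- N\<bar> = N" using Ngt by auto
  have same: "wt x y u ?v i = wt x y u w i" if i: "i \<in> {1..int n} - {j, p}" for i
  proof (rule wt_same)
    show "?v i = w i" using A[of i] i pr Ngt by auto
    have ne: "\<bar>w i\<bar> \<noteq> p"
    proof
      assume "\<bar>w i\<bar> = p"
      then have "\<bar>w i\<bar> = \<bar>w j\<bar>" using p_def by simp
      then have "\<bar>i\<bar> = \<bar>j\<bar>" by (rule sp_abs_eq[OF w])
      then show False using i j by auto
    qed
    show "?v \<bar>w i\<bar> = w \<bar>w i\<bar>" using A[of "\<bar>w i\<bar>"] sp_range[OF w, of i] i ne pr Ngt by auto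
  qed
  have vN: "?v N = w p" using A[of N] pr Ngt by auto
  have vp: "?v p = (if e then N else - N)" using A[of p] by auto
  have wpr: "1 \<le> \<bar>w p\<bar> \<and> \<bar>w p\<bar> \<le> int n" using sp_range[OF w, of p] pr by simp
  have wtp: "wt x y u ?v p = (if e then y else x)"
  proof (cases e)
    case True
    then have "?v \<bar>?v p\<bar> < ?v p" "\<not> ?v \<bar>?v p\<bar> > ?v p" using vp vN aN wpr Ngt by auto
    then show ?thesis using True unfolding wt_def by simp
  next
    case False
    then have "?v \<bar>?v p\<bar> > ?v p" using vp vN aN wpr Ngt by auto
    then show ?thesis using False unfolding wt_def by simp
  qed
  have PWe: "PW (Suc n) x y u ?v = wt x y u ?v N * (\<Prod>i\<in>{1..int n}. wt x y u ?v i)"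
    unfolding PW_def Icc_Suc N[symmetric] using Ngt by (subst prod.insert) auto
  show ?thesis
  proof (cases "j = p")
    case True
    have wj: "w p = p \<or> w p = - p" using True p_def pr by arith
    have wtN: "wt x y u ?v N = (if e then x else y)"
    proof (cases e)
      case True
      then have "?v \<bar>?v N\<bar> > ?v N" using vN vp wj pr Ngt by auto
      then show ?thesis using True unfolding wt_def by simp
    next
      case False
      then have "\<not> ?v \<bar>?v N\<bar> > ?v N" "?v \<bar>?v N\<bar> < ?v N" using vN vp wj pr Ngt by auto
      then show ?thesis using False unfolding wt_def by simp
    qed
    have "(\<Prod>i\<in>{1..int n}. wt x y u ?v i) = wt x y u ?v p * (\<Prod>i\<in>{1..int n} - {p}. wt x y u ?v i)"
      using pr by (simp add: prod.remove[of "{1..int n}" p])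
    also have "(\<Prod>i\<in>{1..int n} - {p}. wt x y u ?v i) = (\<Prod>i\<in>{1..int n} - {j}. wt x y u w i)"
      using same True by (intro prod.cong) auto
    finally show ?thesis using PWe wtN wtp p_def by simp
  next
    case False
    have vj: "?v j = w j" using A[of j] j pr False Ngt by auto
    have wjr: "1 \<le> \<bar>w j\<bar> \<and> \<bar>w j\<bar> \<le> int n" using sp_range[OF w j] .
    have wjb: "- int n \<le> w j \<and> w j \<le> int n" using wjr by arith
    have pj: "\<bar>w j\<bar> = p" using p_def by simp
    have wtj: "wt x y u ?v j = (if e then x else y)"
    proof (cases e)
      case True
      then have "?v \<bar>?v j\<bar> > ?v j" using vj vp wjb Ngt pj by auto
      then show ?thesis using True unfolding wt_def by simp
    next
      case False
      then have "\<not> ?v \<bar>?v j\<bar> > ?v j" "?v \<bar>?v j\<bar> < ?v j" using vj vp wjb Ngt pj by auto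
      then show ?thesis using False unfolding wt_def by simp
    qed
    have q: "\<bar>w p\<bar> \<noteq> p"
    proof
      assume "\<bar>w p\<bar> = p"
      then have "\<bar>w p\<bar> = \<bar>w j\<bar>" using p_def by simp
      then have "\<bar>p\<bar> = \<bar>j\<bar>" by (rule sp_abs_eq[OF w])
      then show False using False pr j by auto
    qed
    have vq: "?v \<bar>w p\<bar> = w \<bar>w p\<bar>" using A[of "\<bar>w p\<bar>"] q wpr pr Ngt by auto
    have c1: "?v N \<noteq> - N" using vN wpr Ngt by auto
    have c2: "w p \<noteq> - p" using q pr by auto
    have wtN: "wt x y u ?v N = wt x y u w p"
      unfolding wt_def using vN vq c1 c2 by simp
    have jp: "p \<in> {1..int n} - {j}" using pr False by auto
    have "(\<Prod>i\<in>{1..int n}. wt x y u ?v i) = wt x y u ?v j * (wt x y u ?v p *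
        (\<Prod>i\<in>{1..int n} - {j} - {p}. wt x y u ?v i))"
      using j jp by (simp add: prod.remove[of "{1..int n}" j] prod.remove[of "{1..int n} - {j}" p])
    also have "(\<Prod>i\<in>{1..int n} - {j} - {p}. wt x y u ?v i) = (\<Prod>i\<in>{1..int n} - {j} - {p}. wt x y u w i)"
      using same by (intro prod.cong) auto
    finally have "PW (Suc n) x y u ?v = wt x y u w p * ((if e then x else y) * ((if e then y else x) *
        (\<Prod>i\<in>{1..int n} - {j} - {p}. wt x y u w i)))" using PWe wtN wtj wtp by simp
    moreover have "(\<Prod>i\<in>{1..int n} - {j}. wt x y u w i) = wt x y u w p * (\<Prod>i\<in>{1..int n} - {j} - {p}. wt x y u w i)"
      using jp by (simp add: prod.remove[of "{1..int n} - {j}" p])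
    ultimately show ?thesis using p_def by (cases e) (simp_all add: algebra_simps)
  qed
qed


lemma orb_self: "i \<in> orb f i"
  unfolding orb_def by (metis funpow_0 rangeI)
lemma orb_step: "a \<in> orb f i \<Longrightarrow> f a \<in> orb f i"
  unfolding orb_def by (auto simp del: funpow.simps simp: funpow_Suc_right[symmetric] image_iff)
    (metis comp_apply funpow.simps(2))
lemma orb_sub:
  assumes "i \<in> S" "\<And>a. a \<in> S \<Longrightarrow> f a \<in> S"
  shows "orb f i \<subseteq> S"
proof -
  have "(f ^^ m) i \<in> S" for m by (induction m) (use assms in auto)
  then show ?thesis unfolding orb_def by auto
qed
lemma orb_trans: "a \<in> orb f i \<Longrightarrow> orb f a \<subseteq> orb f i"
  by (rule orb_sub) (auto intro: orb_step)

lemma orb_period: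
  assumes S: "finite S" and inj: "inj_on f S" and im: "f ` S \<subseteq> S" and a: "a \<in> S"
  shows "a \<in> orb f (f a)"
proof -
  define g where "g = (\<lambda>x. if x \<in> S then f x else x)"
  have fS: "f ` S = S" using endo_inj_surj[OF S im inj] .
  have "bij_betw g S S" unfolding bij_betw_def
  proof
    show "inj_on g S" using inj unfolding g_def inj_on_def by auto
    show "g ` S = S" using fS unfolding g_def by (auto simp: image_iff)
  qed
  then have "g permutes S" by (rule bij_imp_permutes) (simp add: g_def)
  then have "permutation g" using S permutation_permutes by blast
  then obtain m where m: "(g ^^ m) = id" "m > 0" by (rule permutation_is_nilpotent)
  have gf: "(g ^^ k) x = (f ^^ k) x \<and> (f ^^ k) x \<in> S" if "x \<in> S" for k x
    by (induction k) (use that im in \<open>auto simp: g_def\<close>)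
  have "a = (f ^^ m) a" using gf[OF a, of m] m by simp
  also have "\<dots> = (f ^^ (m - 1)) (f a)" using m(2)
    by (metis Suc_diff_1 comp_apply funpow_Suc_right)
  finally show ?thesis unfolding orb_def by auto
qed

lemma fw_range: "w \<in> signed_perms n \<Longrightarrow> a \<in> {1..int n} \<Longrightarrow> \<bar>w a\<bar> \<in> {1..int n}"
  using sp_range by auto

lemma orb_fw_sub: "w \<in> signed_perms n \<Longrightarrow> i \<in> {1..int n} \<Longrightarrow> orb (\<lambda>j. \<bar>w j\<bar>) i \<subseteq> {1..int n}"
  by (rule orb_sub) (auto dest: fw_range)

lemma cyc_insN:
  assumes w: "w \<in> signed_perms n"
  shows "cyc (Suc n) (ins n w e (int n + 1)) = Suc (cyc n w)"
proof -
  obtain N where N: "N = int n + 1" by simp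
  let ?v = "ins n w e (int n + 1)"
  have v: "?v \<in> signed_perms (Suc n)" by (rule ins_sp[OF w]) simp
  have A: "?v i = (if i = N then (if e then N else - N) else if i = - N then (if e then - N else N)
     else w i)" for i
    using ins_apply[OF w, of "int n + 1" e i] N sp_N[OF w] sp_mN[OF w] by auto
  have Ngt: "N > int n" using N by simp
  let ?fv = "\<lambda>j. \<bar>?v j\<bar>" and ?fw = "\<lambda>j. \<bar>w j\<bar>"
  have same: "orb ?fv i = orb ?fw i" if i: "i \<in> {1..int n}" for i
  proof -
    have "(?fv ^^ m) i = (?fw ^^ m) i \<and> (?fw ^^ m) i \<in> {1..int n}" for m
    proof (induction m)
      case (Suc m)
      then show ?case using A[of "(?fw ^^ m) i"] Ngt fw_range[OF w, of "(?fw ^^ m) i"] by auto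
    qed (use i in auto)
    then show ?thesis unfolding orb_def by auto
  qed
  have oN: "orb ?fv N = {N}"
  proof -
    have "(?fv ^^ m) N = N" for m by (induction m) (use A[of N] Ngt in auto)
    then show ?thesis unfolding orb_def by auto
  qed
  have I: "{1..int (Suc n)} = insert N {1..int n}" using Icc_Suc N by simp
  have "orb ?fv ` {1..int (Suc n)} = insert (orb ?fv N) (orb ?fv ` {1..int n})" unfolding I by simp
  also have "orb ?fv ` {1..int n} = orb ?fw ` {1..int n}" by (rule image_cong[OF refl same])
  finally have "orb ?fv ` {1..int (Suc n)} = insert {N} (orb ?fw ` {1..int n})" using oN by simp
  moreover have "{N} \<notin> orb ?fw ` {1..int n}"
    using orb_fw_sub[OF w] Ngt by fastforce
  ultimately show ?thesis unfolding cyc_alt[OF v] cyc_alt[OF w] by simp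
qed


lemma cyc_ins:
  assumes w: "w \<in> signed_perms n" and pr: "p \<in> {1..int n}"
  shows "cyc (Suc n) (ins n w e p) = cyc n w"
proof -
  obtain N where N: "N = int n + 1" by simp
  let ?v = "ins n w e p"
  have p: "p \<in> {1..int n + 1}" using pr by simp
  have v: "?v \<in> signed_perms (Suc n)" by (rule ins_sp[OF w p])
  have A: "?v i = (if i = p then (if e then N else - N) else if i = - p then (if e then - N else N)
     else if i = N then w p else if i = - N then - w p else w i)" for i
    using ins_apply[OF w p, of e i] N by simp
  have Ngt: "N > int n" using N by simp
  let ?fv = "\<lambda>j. \<bar>?v j\<bar>" and ?fw = "\<lambda>j. \<bar>w j\<bar>"
  have fvp: "?fv p = N" using A[of p] Ngt by auto
  have fvN: "?fv N = ?fw p" using A[of N] Ngt pr by auto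
  have fvj: "?fv j = ?fw j" if "j \<in> {1..int n}" "j \<noteq> p" for j
    using A[of j] that Ngt pr by auto
  have fwN: "?fw N = N" using sp_N[OF w] N Ngt by simp
  have fvr: "?fv a \<in> {1..N}" if "a \<in> {1..N}" for a
    using fw_range[OF v, of a] that N by simp
  define g where "g S = (if p \<in> S then insert N S else S)" for S
  have main: "orb ?fv i = g (orb ?fw i)" if i: "i \<in> {1..int n}" for i
  proof
    let ?O = "orb ?fw i"
    have Osub: "?O \<subseteq> {1..int n}" by (rule orb_fw_sub[OF w i])
    show "orb ?fv i \<subseteq> g ?O"
    proof (rule orb_sub)
      show "i \<in> g ?O" using orb_self[of i] unfolding g_def by auto
      fix a assume a: "a \<in> g ?O"
      show "?fv a \<in> g ?O"
      proof (cases "a \<in> ?O")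
        case True
        then have ar: "a \<in> {1..int n}" using Osub by auto
        show ?thesis
        proof (cases "a = p")
          case True then show ?thesis using fvp \<open>a \<in> ?O\<close> unfolding g_def by auto
        next
          case False then show ?thesis using fvj[OF ar False] orb_step[OF \<open>a \<in> ?O\<close>]
            unfolding g_def by auto
        qed
      next
        case False
        then have "a = N" "p \<in> ?O" using a unfolding g_def by (auto split: if_splits)
        then show ?thesis using fvN orb_step[of p ?fw i] unfolding g_def by auto
      qed
    qed
    have Vsub: "orb ?fv i \<subseteq> {1..N}" by (rule orb_sub) (use i N fvr in auto)
    have OV: "?O \<subseteq> orb ?fv i"
    proof -
      have "?O \<subseteq> orb ?fv i \<inter> {1..N}"
      proof (rule orb_sub)
        show "i \<in> orb ?fv i \<inter> {1..N}" using orb_self[of i] i N by auto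
        fix a assume a: "a \<in> orb ?fv i \<inter> {1..N}"
        then have aV: "a \<in> orb ?fv i" by simp
        have "?fw a \<in> orb ?fv i"
        proof (cases "a = p")
          case True
          then have "N \<in> orb ?fv i" using orb_step[OF aV] fvp by simp
          then show ?thesis using orb_step[of N ?fv i] fvN True by simp
        next
          case False
          show ?thesis
          proof (cases "a = N")
            case True then show ?thesis using aV fwN by simp
          next
            case False
            then have "a \<in> {1..int n}" using a N by auto
            then show ?thesis using fvj[of a] \<open>a \<noteq> p\<close> orb_step[OF aV] by simp
          qed
        qed
        moreover have "?fw a \<in> {1..N}"
        proof (cases "a = N")
          case True then show ?thesis using fwN N by simp
        next
          case False
          then have "a \<in> {1..int n}" using a N by auto
          then show ?thesis using fw_range[OF w] N by fastforce
        qed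
        ultimately show "?fw a \<in> orb ?fv i \<inter> {1..N}" by simp
      qed
      then show ?thesis by simp
    qed
    show "g ?O \<subseteq> orb ?fv i"
    proof (cases "p \<in> ?O")
      case True
      then have "p \<in> orb ?fv i" using OV by blast
      then have "N \<in> orb ?fv i" using orb_step[of p ?fv i] fvp by simp
      then show ?thesis using OV True unfolding g_def by simp
    next
      case False then show ?thesis using OV unfolding g_def by simp
    qed
  qed
  have injfw: "inj_on ?fw {1..int n}"
  proof (rule inj_onI)
    fix a b assume a: "a \<in> {1..int n}" and b: "b \<in> {1..int n}" and e: "?fw a = ?fw b"
    have "\<bar>a\<bar> = \<bar>b\<bar>" using e by (rule sp_abs_eq[OF w])
    then show "a = b" using a b by simp
  qed
  have fwim: "?fw ` {1..int n} \<subseteq> {1..int n}" using fw_range[OF w] by auto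
  have oN: "orb ?fv N = orb ?fv p"
  proof
    show "orb ?fv N \<subseteq> orb ?fv p" using orb_trans[of N ?fv p] orb_step[OF orb_self[of p ?fv]] fvp by simp
    have fwp: "?fw p \<in> {1..int n}" using fw_range[OF w pr] .
    have "p \<in> orb ?fw (?fw p)" by (rule orb_period[OF _ injfw fwim pr]) simp
    then have "p \<in> orb ?fv (?fw p)" using main[OF fwp] unfolding g_def by (auto split: if_splits)
    moreover have "orb ?fv (?fw p) \<subseteq> orb ?fv N"
      using orb_trans[of "?fw p" ?fv N] orb_step[OF orb_self[of N ?fv]] fvN by simp
    ultimately show "orb ?fv p \<subseteq> orb ?fv N" using orb_trans by blast
  qed
  have I: "{1..int (Suc n)} = insert N {1..int n}" using Icc_Suc N by simp
  have "orb ?fv ` {1..int (Suc n)} = insert (orb ?fv N) (orb ?fv ` {1..int n})" unfolding I by simp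
  also have "\<dots> = orb ?fv ` {1..int n}" using oN pr by auto
  also have "\<dots> = g ` (orb ?fw ` {1..int n})"
    using main by (auto simp: image_iff)
  finally have e1: "orb ?fv ` {1..int (Suc n)} = g ` (orb ?fw ` {1..int n})" .
  have "inj_on g (orb ?fw ` {1..int n})"
  proof (rule inj_onI)
    fix S T assume S: "S \<in> orb ?fw ` {1..int n}" and T: "T \<in> orb ?fw ` {1..int n}" and e: "g S = g T"
    have "N \<notin> S" "N \<notin> T" using S T orb_fw_sub[OF w] Ngt by fastforce+
    then have "S = g S - {N}" "T = g T - {N}" unfolding g_def by auto
    then show "S = T" using e by simp
  qed
  then have "card (g ` (orb ?fw ` {1..int n})) = card (orb ?fw ` {1..int n})" by (rule card_image)
  then show ?thesis unfolding cyc_alt[OF v] cyc_alt[OF w] e1 .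
qed


lemma cyc_le: "w \<in> signed_perms n \<Longrightarrow> cyc n w \<le> n"
proof -
  assume w: "w \<in> signed_perms n"
  have "cyc n w \<le> card {1..int n}" unfolding cyc_alt[OF w] by (rule card_image_le) simp
  then show ?thesis by simp
qed

lemma fw_inj: "w \<in> signed_perms n \<Longrightarrow> inj_on (\<lambda>j. \<bar>w j\<bar>) {1..int n}"
proof (rule inj_onI)
  fix a b assume w: "w \<in> signed_perms n" and a: "a \<in> {1..int n}" and b: "b \<in> {1..int n}"
    and e: "\<bar>w a\<bar> = \<bar>w b\<bar>"
  have "\<bar>a\<bar> = \<bar>b\<bar>" using e by (rule sp_abs_eq[OF w])
  then show "a = b" using a b by simp
qed

lemma fw_image: "w \<in> signed_perms n \<Longrightarrow> (\<lambda>j. \<bar>w j\<bar>) ` {1..int n} = {1..int n}"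
  by (rule endo_inj_surj) (auto dest: fw_range intro: fw_inj)

lemma finite_sp: "finite (signed_perms n)"
proof -
  have "signed_perms n \<subseteq> {w. w permutes SS n}" unfolding signed_perms_def by auto
  moreover have "finite {w. w permutes SS n}" by (rule finite_permutations) simp
  ultimately show ?thesis by (rule finite_subset)
qed

lemma sum_UNIV_bool: "(\<Sum>e\<in>(UNIV::bool set). f e) = f True + f False"
  by (simp add: UNIV_bool add.commute)

lemma H_rec: "H (Suc n) x y u k = (\<Sum>w\<in>signed_perms n. k ^ (n - cyc n w) *
   ((u + y) * PW n x y u w + 2 * k * x * y * (\<Sum>j\<in>{1..int n}. \<Prod>i\<in>{1..int n} - {j}. wt x y u w i)))"
proof -
  define G where "G v = k ^ (Suc n - cyc (Suc n) v) * PW (Suc n) x y u v" for v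
  have "H (Suc n) x y u k = (\<Sum>v\<in>signed_perms (Suc n). G v)" unfolding H_PW G_def ..
  also have "\<dots> = (\<Sum>v\<in>(\<lambda>(w, e, p). ins n w e p) ` (signed_perms n \<times> UNIV \<times> {1..int n + 1}). G v)"
    by (simp only: ins_image)
  also have "\<dots> = (\<Sum>(w, e, p)\<in>signed_perms n \<times> UNIV \<times> {1..int n + 1}. G (ins n w e p))"
    by (subst sum.reindex[OF ins_inj]) (simp add: case_prod_beta o_def)
  also have "\<dots> = (\<Sum>w\<in>signed_perms n. \<Sum>(e, p)\<in>UNIV \<times> {1..int n + 1}. G (ins n w e p))"
    by (subst sum.cartesian_product) simp
  also have "\<dots> = (\<Sum>w\<in>signed_perms n. \<Sum>e\<in>UNIV. \<Sum>p\<in>{1..int n + 1}. G (ins n w e p))"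
    by (subst sum.cartesian_product) simp
  also have "\<dots> = (\<Sum>w\<in>signed_perms n. k ^ (n - cyc n w) *
   ((u + y) * PW n x y u w + 2 * k * x * y * (\<Sum>j\<in>{1..int n}. \<Prod>i\<in>{1..int n} - {j}. wt x y u w i)))"
  proof (rule sum.cong[OF refl])
    fix w assume w: "w \<in> signed_perms n"
    have cl: "cyc n w \<le> n" by (rule cyc_le[OF w])
    have I: "{1..int n + 1} = insert (int n + 1) {1..int n}" by auto
    have gN: "G (ins n w e (int n + 1)) = k ^ (n - cyc n w) * ((if e then u else y) * PW n x y u w)" for e
      unfolding G_def PW_insN[OF w] cyc_insN[OF w] by simp
    have gp: "(\<Sum>p\<in>{1..int n}. G (ins n w e p)) =
       k ^ (n - cyc n w) * (k * x * y * (\<Sum>j\<in>{1..int n}. \<Prod>i\<in>{1..int n} - {j}. wt x y u w i))" for e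
    proof -
      have "(\<Sum>p\<in>{1..int n}. G (ins n w e p)) = (\<Sum>p\<in>(\<lambda>j. \<bar>w j\<bar>) ` {1..int n}. G (ins n w e p))"
        by (simp only: fw_image[OF w])
      also have "\<dots> = (\<Sum>j\<in>{1..int n}. G (ins n w e \<bar>w j\<bar>))"
        by (subst sum.reindex[OF fw_inj[OF w]]) (simp add: o_def)
      also have "\<dots> = (\<Sum>j\<in>{1..int n}. k ^ (n - cyc n w) * (k * x * y * (\<Prod>i\<in>{1..int n} - {j}. wt x y u w i)))"
      proof (rule sum.cong[OF refl])
        fix j assume j: "j \<in> {1..int n}"
        have "Suc n - cyc n w = Suc (n - cyc n w)" using cl by simp
        then show "G (ins n w e \<bar>w j\<bar>) = k ^ (n - cyc n w) * (k * x * y * (\<Prod>i\<in>{1..int n} - {j}. wt x y u w i))"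
          unfolding G_def PW_ins[OF w j] cyc_ins[OF w fw_range[OF w j]] by simp
      qed
      also have "\<dots> = k ^ (n - cyc n w) * (k * x * y * (\<Sum>j\<in>{1..int n}. \<Prod>i\<in>{1..int n} - {j}. wt x y u w i))"
        by (simp add: sum_distrib_left)
      finally show ?thesis .
    qed
    have "(\<Sum>e\<in>UNIV. \<Sum>p\<in>{1..int n + 1}. G (ins n w e p)) =
        (\<Sum>e\<in>UNIV. G (ins n w e (int n + 1)) + (\<Sum>p\<in>{1..int n}. G (ins n w e p)))"
      unfolding I by (subst sum.insert) auto
    also have "\<dots> = k ^ (n - cyc n w) *
      ((u + y) * PW n x y u w + 2 * k * x * y * (\<Sum>j\<in>{1..int n}. \<Prod>i\<in>{1..int n} - {j}. wt x y u w i))"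
      unfolding sum_UNIV_bool gN gp by (simp add: algebra_simps)
    finally show "(\<Sum>e\<in>UNIV. \<Sum>p\<in>{1..int n + 1}. G (ins n w e p)) = k ^ (n - cyc n w) *
      ((u + y) * PW n x y u w + 2 * k * x * y * (\<Sum>j\<in>{1..int n}. \<Prod>i\<in>{1..int n} - {j}. wt x y u w i))" .
  qed
  finally show ?thesis .
qed


fun hh :: "real \<Rightarrow> real \<Rightarrow> real \<Rightarrow> nat \<Rightarrow> nat \<Rightarrow> real" where
  "hh k d s 0 j = (if j = 0 then 1 else 0)"
| "hh k d s (Suc n) j = (s + 2 * k * d * real j) * hh k d s n j
     + (if j = 0 then 0 else 2 * (1 + k * (real j - 1)) * hh k d s n (j - 1))"

lemma hh_zero: "n < j \<Longrightarrow> hh k d s n j = 0"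
  by (induction n arbitrary: j) auto

lemma sp_0: "signed_perms 0 = {id}"
  unfolding signed_perms_def by (auto simp: permutes_empty)

lemma H_0: "H 0 x y u k = 1"
  unfolding H_PW sp_0 by (simp add: cyc_def PW_def)

lemma PW_deriv:
  "((\<lambda>t. PW n (x + t) (y + t) (u + t) w) has_real_derivative
     (\<Sum>j\<in>{1..int n}. \<Prod>i\<in>{1..int n} - {j}. wt x y u w i)) (at 0)"
proof -
  have e: "PW n (x + t) (y + t) (u + t) w = (\<Prod>i\<in>{1..int n}. wt x y u w i + t)" for t
    unfolding PW_def wt_def by (rule prod.cong) auto
  have "((\<lambda>t. \<Prod>i\<in>{1..int n}. wt x y u w i + t) has_derivative
     (\<lambda>h. \<Sum>j\<in>{1..int n}. h * (\<Prod>i\<in>{1..int n} - {j}. wt x y u w i + 0))) (at 0)"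
    by (rule has_derivative_prod) (auto intro!: derivative_eq_intros)
  moreover have "(\<lambda>h. \<Sum>j\<in>{1..int n}. h * (\<Prod>i\<in>{1..int n} - {j}. wt x y u w i + 0))
      = (*) (\<Sum>j\<in>{1..int n}. \<Prod>i\<in>{1..int n} - {j}. wt x y u w i)"
    by (rule ext, subst sum_distrib_right) (simp add: mult.commute)
  ultimately show ?thesis unfolding e has_field_derivative_def by simp
qed

lemma H_deriv:
  "((\<lambda>t. H n (x + t) (y + t) (u + t) k) has_real_derivative
     (\<Sum>w\<in>signed_perms n. k ^ (n - cyc n w) * (\<Sum>j\<in>{1..int n}. \<Prod>i\<in>{1..int n} - {j}. wt x y u w i))) (at 0)"
  unfolding H_PW by (intro DERIV_sum DERIV_cmult PW_deriv)

lemma poly_deriv: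
  "((\<lambda>t. \<Sum>j\<le>n. c j * (x + t) ^ j) has_real_derivative (\<Sum>j\<le>n. c j * (real j * x ^ (j - 1)))) (at 0)"
  by (intro DERIV_sum DERIV_cmult) (auto intro!: derivative_eq_intros)

lemma H_poly: "H n x y u k = (\<Sum>j\<le>n. hh k (y - x) (y + u - 2 * x) n j * x ^ j)"
proof (induction n arbitrary: x y u)
  case 0
  then show ?case by (simp add: H_0)
next
  case (Suc n)
  define d where "d = y - x"
  define s where "s = y + u - 2 * x"
  define D where "D = (\<Sum>w\<in>signed_perms n. k ^ (n - cyc n w) * (\<Sum>j\<in>{1..int n}. \<Prod>i\<in>{1..int n} - {j}. wt x y u w i))"
  have sh: "H n (x + t) (y + t) (u + t) k = (\<Sum>j\<le>n. hh k d s n j * (x + t) ^ j)" for t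
    using Suc.IH[of "x + t" "y + t" "u + t"] unfolding d_def s_def by (simp add: algebra_simps)
  have D1: "((\<lambda>t. H n (x + t) (y + t) (u + t) k) has_real_derivative D) (at 0)"
    unfolding D_def by (rule H_deriv)
  have D2: "((\<lambda>t. H n (x + t) (y + t) (u + t) k) has_real_derivative
      (\<Sum>j\<le>n. hh k d s n j * (real j * x ^ (j - 1)))) (at 0)"
    unfolding sh by (rule poly_deriv)
  have DD: "D = (\<Sum>j\<le>n. hh k d s n j * (real j * x ^ (j - 1)))" using DERIV_unique[OF D1 D2] .
  have HS: "H (Suc n) x y u k = (u + y) * H n x y u k + 2 * k * x * y * D"
    unfolding H_rec unfolding H_PW D_def by (simp add: sum_distrib_left sum.distrib algebra_simps)
  have xj: "x * (real j * x ^ (j - 1)) = real j * x ^ j" for j by (cases j) auto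
  have "H (Suc n) x y u k = (\<Sum>j\<le>n. (s + 2 * k * d * real j) * hh k d s n j * x ^ j
      + 2 * (1 + k * real j) * hh k d s n j * x ^ Suc j)"
  proof -
    have "H (Suc n) x y u k = (\<Sum>j\<le>n. (u + y) * (hh k d s n j * x ^ j)
       + 2 * k * y * (hh k d s n j * (x * (real j * x ^ (j - 1)))))"
      unfolding HS DD Suc.IH d_def[symmetric] s_def[symmetric]
      by (simp add: sum_distrib_left sum.distrib algebra_simps)
    also have "\<dots> = (\<Sum>j\<le>n. (s + 2 * k * d * real j) * hh k d s n j * x ^ j
      + 2 * (1 + k * real j) * hh k d s n j * x ^ Suc j)"
      unfolding xj by (rule sum.cong) (auto simp: s_def d_def algebra_simps)
    finally show ?thesis .
  qed
  also have "\<dots> = (\<Sum>j\<le>Suc n. (s + 2 * k * d * real j) * hh k d s n j * x ^ j)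
      + (\<Sum>j\<le>Suc n. (if j = 0 then 0 else 2 * (1 + k * (real j - 1)) * hh k d s n (j - 1)) * x ^ j)"
  proof -
    have S1: "(\<Sum>j\<le>Suc n. (s + 2 * k * d * real j) * hh k d s n j * x ^ j)
        = (\<Sum>j\<le>n. (s + 2 * k * d * real j) * hh k d s n j * x ^ j)"
      by (simp add: hh_zero)
    have S2: "(\<Sum>j\<le>Suc n. (if j = 0 then 0 else 2 * (1 + k * (real j - 1)) * hh k d s n (j - 1)) * x ^ j)
        = (\<Sum>j\<le>n. 2 * (1 + k * real j) * hh k d s n j * x ^ Suc j)"
      by (subst sum.atMost_Suc_shift) simp
    show ?thesis unfolding S1 S2 sum.distrib ..
  qed
  also have "\<dots> = (\<Sum>j\<le>Suc n. hh k d s (Suc n) j * x ^ j)"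
    by (simp add: sum.distrib[symmetric] algebra_simps)
  finally show ?case unfolding d_def s_def .
qed



definition gam :: "real \<Rightarrow> real \<Rightarrow> nat \<Rightarrow> real" where
  "gam k d j = ((- 1 / k) gchoose j) * (- 1 / d) ^ j"

definition PP :: "real \<Rightarrow> real \<Rightarrow> nat \<Rightarrow> nat \<Rightarrow> real" where
  "PP c s n j = (\<Sum>i\<le>j. real (j choose i) * (- 1) ^ (j - i) * (s + c * real i) ^ n)"

lemma PP_0: "PP c s 0 j = (if j = 0 then 1 else 0)"
proof -
  have "PP c s 0 j = (1 + (- 1 :: real)) ^ j"
    unfolding PP_def binomial_ring by simp
  then show ?thesis by simp
qed

lemma PP_rec0: "PP c s (Suc n) 0 = s * PP c s n 0"
  unfolding PP_def by simp

lemma PP_rec: "PP c s (Suc n) (Suc m) = (s + c * real (Suc m)) * PP c s n (Suc m) + c * real (Suc m) * PP c s n m"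
proof -
  let ?j = "Suc m"
  have "PP c s (Suc n) ?j - (s + c * real ?j) * PP c s n ?j =
      (\<Sum>i\<le>?j. real (?j choose i) * (- 1) ^ (?j - i) * (s + c * real i) ^ n * (c * (real i - real ?j)))"
    unfolding PP_def by (simp add: sum_distrib_left sum_subtractf[symmetric] algebra_simps)
  also have "\<dots> = (\<Sum>i\<le>?j. c * real ?j * (real (m choose i) * (- 1) ^ (m - i) * (s + c * real i) ^ n))"
  proof (rule sum.cong[OF refl])
    fix i assume i: "i \<in> {..?j}"
    have a: "real (?j - i) * real (?j choose i) = real ?j * real (m choose i)"
      using binomial_absorb_comp[of ?j i] by (metis diff_Suc_1 of_nat_mult)
    show "real (?j choose i) * (- 1) ^ (?j - i) * (s + c * real i) ^ n * (c * (real i - real ?j)) =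
        c * real ?j * (real (m choose i) * (- 1) ^ (m - i) * (s + c * real i) ^ n)"
    proof (cases "i = ?j")
      case True then show ?thesis by simp
    next
      case False
      then have ii: "i \<le> m" using i by auto
      then have ji: "?j - i = Suc (m - i)" by simp
      have a': "real (?j choose i) * (real ?j - real i) = real ?j * real (m choose i)"
        using a ii by (simp add: of_nat_diff mult.commute)
      let ?F = "(- 1) ^ (m - i) * (s + c * real i) ^ n"
      have "real (?j choose i) * (- 1) ^ (?j - i) * (s + c * real i) ^ n * (c * (real i - real ?j))
          = c * ?F * (real (?j choose i) * (real ?j - real i))"
        unfolding ji by (simp add: algebra_simps)
      also have "\<dots> = c * ?F * (real ?j * real (m choose i))" unfolding a' ..
      finally show ?thesis by (simp add: algebra_simps)
    qed
  qed
  also have "\<dots> = c * real ?j * PP c s n m"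
    unfolding PP_def by (simp add: sum_distrib_left)
  finally show ?thesis by (simp add: algebra_simps)
qed

lemma gam_rec:
  assumes k: "k > 0" and d: "d \<noteq> 0"
  shows "gam k d (Suc m) * (2 * k * d) * real (Suc m) = 2 * (1 + k * real m) * gam k d m"
proof -
  define G where "G = (\<lambda>m. (- 1 / k) gchoose m)"
  define D where "D = - 1 / d"
  have g: "real (Suc m) * G (Suc m) = G m * (- 1 / k - real m)"
    using gbinomial_mult_1[of "- 1 / k" m] unfolding G_def by (simp add: algebra_simps)
  have DD: "D * (2 * k * d) = - 2 * k" unfolding D_def using d by simp
  have kk: "(- 1 / k - real m) * (- 2 * k) = 2 * (1 + k * real m)" using k by (simp add: field_simps)
  have "gam k d (Suc m) * (2 * k * d) * real (Suc m) = (real (Suc m) * G (Suc m)) * D ^ m * (D * (2 * k * d))"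
    unfolding gam_def G_def D_def by (simp only: power_Suc mult_ac)
  also have "\<dots> = G m * D ^ m * ((- 1 / k - real m) * (- 2 * k))" unfolding g DD by (simp only: mult_ac)
  also have "\<dots> = 2 * (1 + k * real m) * gam k d m" unfolding kk gam_def G_def D_def by (simp only: mult_ac)
  finally show ?thesis .
qed

lemma hh_explicit:
  assumes k: "k > 0" and d: "d \<noteq> 0"
  shows "hh k d s n j = gam k d j * PP (2 * k * d) s n j"
proof (induction n arbitrary: j)
  case 0
  then show ?case by (simp add: PP_0 gam_def)
next
  case (Suc n)
  show ?case
  proof (cases j)
    case 0
    then show ?thesis using Suc.IH[of 0] by (simp add: PP_rec0 gam_def)
  next
    case (Suc m)
    have "hh k d s (Suc n) j = (s + 2 * k * d * real j) * (gam k d j * PP (2 * k * d) s n j)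
        + 2 * (1 + k * real m) * (gam k d m * PP (2 * k * d) s n m)"
      using Suc.IH[of j] Suc.IH[of m] \<open>j = Suc m\<close> by simp
    also have "2 * (1 + k * real m) * (gam k d m * PP (2 * k * d) s n m) =
        gam k d j * (2 * k * d * real j * PP (2 * k * d) s n m)"
    proof -
      have "2 * (1 + k * real m) * (gam k d m * PP (2 * k * d) s n m) =
          (2 * (1 + k * real m) * gam k d m) * PP (2 * k * d) s n m" by simp
      also have "\<dots> = (gam k d (Suc m) * (2 * k * d) * real (Suc m)) * PP (2 * k * d) s n m"
        by (simp only: gam_rec[OF k d])
      finally show ?thesis using \<open>j = Suc m\<close> by (simp add: algebra_simps)
    qed
    finally show ?thesis using PP_rec[of "2 * k * d" s n m] \<open>j = Suc m\<close> by (simp add: algebra_simps)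
  qed
qed


lemma exp_sums_real: "(\<lambda>n. a ^ n * (z ^ n / fact n)) sums exp (a * z)" for a z :: real
proof -
  have "(\<lambda>n. (a * z) ^ n /\<^sub>R fact n) sums exp (a * z)" by (rule exp_converges)
  then show ?thesis by (simp add: power_mult_distrib divide_inverse mult_ac)
qed

lemma PP_sums: "(\<lambda>n. PP c s n j * z ^ n / fact n) sums (exp (s * z) * (exp (c * z) - 1) ^ j)"
proof -
  have "(\<lambda>n. \<Sum>i\<le>j. real (j choose i) * (- 1) ^ (j - i) * ((s + c * real i) ^ n * (z ^ n / fact n)))
     sums (\<Sum>i\<le>j. real (j choose i) * (- 1) ^ (j - i) * exp ((s + c * real i) * z))"
    by (intro sums_sum sums_mult exp_sums_real)
  moreover have "(\<lambda>n. \<Sum>i\<le>j. real (j choose i) * (- 1) ^ (j - i) * ((s + c * real i) ^ n * (z ^ n / fact n)))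
      = (\<lambda>n. PP c s n j * z ^ n / fact n)"
  proof (rule ext)
    fix n
    have "(\<Sum>i\<le>j. real (j choose i) * (- 1) ^ (j - i) * ((s + c * real i) ^ n * (z ^ n / fact n)))
       = (\<Sum>i\<le>j. real (j choose i) * (- 1) ^ (j - i) * (s + c * real i) ^ n) * (z ^ n / fact n)"
      by (simp only: sum_distrib_right mult.assoc)
    then show "(\<Sum>i\<le>j. real (j choose i) * (- 1) ^ (j - i) * ((s + c * real i) ^ n * (z ^ n / fact n)))
      = PP c s n j * z ^ n / fact n" unfolding PP_def by simp
  qed
  moreover have "(\<Sum>i\<le>j. real (j choose i) * (- 1) ^ (j - i) * exp ((s + c * real i) * z))
      = exp (s * z) * (exp (c * z) - 1) ^ j"
  proof -
    have "(exp (c * z) + (- 1)) ^ j = (\<Sum>i\<le>j. real (j choose i) * exp (c * z) ^ i * (- 1) ^ (j - i))"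
      by (rule binomial_ring)
    moreover have "exp ((s + c * real i) * z) = exp (s * z) * exp (c * z) ^ i" for i
      by (simp add: distrib_right exp_add exp_of_nat_mult[symmetric] algebra_simps)
    ultimately show ?thesis by (simp add: sum_distrib_left algebra_simps)
  qed
  ultimately show ?thesis by simp
qed

definition Aa :: "real \<Rightarrow> real \<Rightarrow> real \<Rightarrow> real \<Rightarrow> nat \<Rightarrow> real" where
  "Aa k d s x n = (\<Sum>j\<le>n. \<bar>hh k d s n j\<bar> * \<bar>x\<bar> ^ j)"

lemma coef_bound:
  assumes k: "k > 0" and j: "j \<le> n"
  shows "\<bar>s\<bar> + 2 * k * \<bar>d\<bar> * real j + 2 * (1 + k * real j) * \<bar>x\<bar>
     \<le> (\<bar>s\<bar> + 2 * k * \<bar>d\<bar> + 2 * \<bar>x\<bar> + 2 * k * \<bar>x\<bar> + 1) * (real n + 1)"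
proof -
  have j1: "real j \<le> real n + 1" using j by simp
  have o: "1 \<le> real n + 1" by simp
  have a: "\<bar>s\<bar> \<le> \<bar>s\<bar> * (real n + 1)" using mult_left_mono[OF o, of "\<bar>s\<bar>"] by simp
  have b: "2 * k * \<bar>d\<bar> * real j \<le> 2 * k * \<bar>d\<bar> * (real n + 1)"
    by (rule mult_left_mono[OF j1]) (use k in simp)
  have c: "2 * \<bar>x\<bar> \<le> 2 * \<bar>x\<bar> * (real n + 1)" using mult_left_mono[OF o, of "2 * \<bar>x\<bar>"] by simp
  have e: "2 * k * \<bar>x\<bar> * real j \<le> 2 * k * \<bar>x\<bar> * (real n + 1)"
    by (rule mult_left_mono[OF j1]) (use k in simp)
  have f: "0 \<le> real n + 1" by simp
  have g: "2 * (1 + k * real j) * \<bar>x\<bar> = 2 * \<bar>x\<bar> + 2 * k * \<bar>x\<bar> * real j" by (simp add: algebra_simps)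
  have h: "(\<bar>s\<bar> + 2 * k * \<bar>d\<bar> + 2 * \<bar>x\<bar> + 2 * k * \<bar>x\<bar> + 1) * (real n + 1) =
     \<bar>s\<bar> * (real n + 1) + 2 * k * \<bar>d\<bar> * (real n + 1) + 2 * \<bar>x\<bar> * (real n + 1)
     + 2 * k * \<bar>x\<bar> * (real n + 1) + (real n + 1)" by algebra
  show ?thesis unfolding g h using a b c e f by linarith
qed

lemma Aa_bound:
  assumes k: "k > 0"
  shows "Aa k d s x n \<le> (\<bar>s\<bar> + 2 * k * \<bar>d\<bar> + 2 * \<bar>x\<bar> + 2 * k * \<bar>x\<bar> + 1) ^ n * fact n"
proof (induction n)
  case 0
  then show ?case by (simp add: Aa_def)
next
  case (Suc n)
  define C where "C = \<bar>s\<bar> + 2 * k * \<bar>d\<bar> + 2 * \<bar>x\<bar> + 2 * k * \<bar>x\<bar> + 1"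
  have C0: "C \<ge> 0" unfolding C_def using k by simp
  let ?a = "\<lambda>j. \<bar>hh k d s n j\<bar> * \<bar>x\<bar> ^ j"
  have "Aa k d s x (Suc n) \<le> (\<Sum>j\<le>Suc n. ((\<bar>s\<bar> + 2 * k * \<bar>d\<bar> * real j) * \<bar>hh k d s n j\<bar>
      + (if j = 0 then 0 else 2 * (1 + k * (real j - 1)) * \<bar>hh k d s n (j - 1)\<bar>)) * \<bar>x\<bar> ^ j)"
    unfolding Aa_def
  proof (rule sum_mono)
    fix j assume "j \<in> {..Suc n}"
    have t1: "\<bar>(s + 2 * k * d * real j) * hh k d s n j\<bar> \<le> (\<bar>s\<bar> + 2 * k * \<bar>d\<bar> * real j) * \<bar>hh k d s n j\<bar>"
    proof -
      have "\<bar>s + 2 * k * d * real j\<bar> \<le> \<bar>s\<bar> + 2 * k * \<bar>d\<bar> * real j"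
        using abs_triangle_ineq[of s "2 * k * d * real j"] k by (simp add: abs_mult)
      then show ?thesis by (simp add: abs_mult mult_right_mono)
    qed
    have t2: "\<bar>(if j = 0 then 0 else 2 * (1 + k * (real j - 1)) * hh k d s n (j - 1))\<bar>
        = (if j = 0 then 0 else 2 * (1 + k * (real j - 1)) * \<bar>hh k d s n (j - 1)\<bar>)"
      using k by (cases j) (auto simp: abs_mult)
    have "\<bar>hh k d s (Suc n) j\<bar> \<le> (\<bar>s\<bar> + 2 * k * \<bar>d\<bar> * real j) * \<bar>hh k d s n j\<bar>
        + (if j = 0 then 0 else 2 * (1 + k * (real j - 1)) * \<bar>hh k d s n (j - 1)\<bar>)"
      using abs_triangle_ineq[of "(s + 2 * k * d * real j) * hh k d s n j"
          "(if j = 0 then 0 else 2 * (1 + k * (real j - 1)) * hh k d s n (j - 1))"] t1 t2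
      by simp
    then show "\<bar>hh k d s (Suc n) j\<bar> * \<bar>x\<bar> ^ j \<le> ((\<bar>s\<bar> + 2 * k * \<bar>d\<bar> * real j) * \<bar>hh k d s n j\<bar>
      + (if j = 0 then 0 else 2 * (1 + k * (real j - 1)) * \<bar>hh k d s n (j - 1)\<bar>)) * \<bar>x\<bar> ^ j"
      by (rule mult_right_mono) simp
  qed
  also have "\<dots> = (\<Sum>j\<le>n. (\<bar>s\<bar> + 2 * k * \<bar>d\<bar> * real j) * \<bar>hh k d s n j\<bar> * \<bar>x\<bar> ^ j)
      + (\<Sum>j\<le>n. 2 * (1 + k * real j) * \<bar>hh k d s n j\<bar> * \<bar>x\<bar> ^ Suc j)"
  proof -
    have S1: "(\<Sum>j\<le>Suc n. (\<bar>s\<bar> + 2 * k * \<bar>d\<bar> * real j) * \<bar>hh k d s n j\<bar> * \<bar>x\<bar> ^ j)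
        = (\<Sum>j\<le>n. (\<bar>s\<bar> + 2 * k * \<bar>d\<bar> * real j) * \<bar>hh k d s n j\<bar> * \<bar>x\<bar> ^ j)"
      by (simp add: hh_zero)
    have S2: "(\<Sum>j\<le>Suc n. (if j = 0 then 0 else 2 * (1 + k * (real j - 1)) * \<bar>hh k d s n (j - 1)\<bar>) * \<bar>x\<bar> ^ j)
        = (\<Sum>j\<le>n. 2 * (1 + k * real j) * \<bar>hh k d s n j\<bar> * \<bar>x\<bar> ^ Suc j)"
      by (subst sum.atMost_Suc_shift) simp
    show ?thesis unfolding S1[symmetric] S2[symmetric] sum.distrib[symmetric] by (simp add: algebra_simps)
  qed
  also have "\<dots> = (\<Sum>j\<le>n. (\<bar>s\<bar> + 2 * k * \<bar>d\<bar> * real j + 2 * (1 + k * real j) * \<bar>x\<bar>) * ?a j)"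
    by (simp add: sum.distrib[symmetric] algebra_simps)
  also have "\<dots> \<le> (\<Sum>j\<le>n. (C * (real n + 1)) * ?a j)"
    by (rule sum_mono, rule mult_right_mono) (use coef_bound[OF k] in \<open>auto simp: C_def\<close>)
  also have "\<dots> = C * (real n + 1) * Aa k d s x n" unfolding Aa_def by (simp add: sum_distrib_left)
  also have "\<dots> \<le> C * (real n + 1) * (C ^ n * fact n)"
    by (rule mult_left_mono) (use Suc.IH C0 in \<open>auto simp: C_def\<close>)
  also have "\<dots> = C ^ Suc n * fact (Suc n)" by (simp add: algebra_simps)
  finally show ?case unfolding C_def .
qed


lemma finsupp_summable:
  fixes g :: "nat \<Rightarrow> real"
  assumes "\<And>j. j > n \<Longrightarrow> g j = 0"
  shows "g summable_on UNIV" and "infsum g UNIV = (\<Sum>j\<le>n. g j)"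
proof -
  have "g summable_on UNIV \<longleftrightarrow> g summable_on {..n}"
    by (rule summable_on_cong_neutral) (use assms in auto)
  then show "g summable_on UNIV" by simp
  have "infsum g UNIV = infsum g {..n}"
    by (rule infsum_cong_neutral) (use assms in auto)
  then show "infsum g UNIV = (\<Sum>j\<le>n. g j)" by simp
qed

lemma summable_on_sums:
  fixes f :: "nat \<Rightarrow> real"
  assumes "f summable_on UNIV" shows "f sums infsum f UNIV"
  using assms by (intro has_sum_imp_sums) (simp add: summable_iff_has_sum_infsum)

lemma main_sums:
  assumes k: "k > 0" and d: "d \<noteq> 0"
    and zC: "\<bar>z\<bar> * (\<bar>s\<bar> + 2 * k * \<bar>d\<bar> + 2 * \<bar>x\<bar> + 2 * k * \<bar>x\<bar> + 1) < 1"
    and t: "\<bar>x * (exp (2 * k * d * z) - 1) / d\<bar> < 1"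
  shows "(\<lambda>n. (\<Sum>j\<le>n. hh k d s n j * x ^ j) * z ^ n / fact n) sums
     (exp (s * z) * (1 - x * (exp (2 * k * d * z) - 1) / d) powr (- 1 / k))"
proof -
  define C where "C = \<bar>s\<bar> + 2 * k * \<bar>d\<bar> + 2 * \<bar>x\<bar> + 2 * k * \<bar>x\<bar> + 1"
  define g where "g n j = hh k d s n j * x ^ j * z ^ n / fact n" for n j
  define c where "c = 2 * k * d"
  define col where "col j = gam k d j * x ^ j * (exp (s * z) * (exp (c * z) - 1) ^ j)" for j
  have gz: "g n j = 0" if "j > n" for n j using hh_zero[OF that] unfolding g_def by simp
  have row: "infsum (g n) UNIV = (\<Sum>j\<le>n. hh k d s n j * x ^ j) * z ^ n / fact n" for n
    using finsupp_summable(2)[of n "g n"] gz unfolding g_def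
    by (simp add: sum_distrib_right sum_divide_distrib)
  have rownorm: "infsum (\<lambda>j. norm (g n j)) UNIV = Aa k d s x n * \<bar>z\<bar> ^ n / fact n" for n
    using finsupp_summable(2)[of n "\<lambda>j. norm (g n j)"] gz unfolding g_def Aa_def
    by (simp add: sum_distrib_right sum_divide_distrib abs_mult power_abs)
  have C0: "C \<ge> 0" unfolding C_def using k by simp
  have geo: "summable (\<lambda>n. (\<bar>z\<bar> * C) ^ n)"
    by (rule summable_geometric) (use zC C0 in \<open>simp add: C_def\<close>)
  have sumA: "summable (\<lambda>n. Aa k d s x n * \<bar>z\<bar> ^ n / fact n)"
  proof (rule summable_comparison_test'[OF geo])
    fix n :: nat
    have A0: "Aa k d s x n \<ge> 0" unfolding Aa_def by (intro sum_nonneg) simp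
    have "Aa k d s x n * \<bar>z\<bar> ^ n / fact n \<le> C ^ n * fact n * \<bar>z\<bar> ^ n / fact n"
      by (intro divide_right_mono mult_right_mono Aa_bound[OF k, of d s x n, folded C_def]) auto
    also have "\<dots> = (\<bar>z\<bar> * C) ^ n" by (simp add: power_mult_distrib)
    finally show "norm (Aa k d s x n * \<bar>z\<bar> ^ n / fact n) \<le> (\<bar>z\<bar> * C) ^ n" using A0 by simp
  qed
  have A0: "Aa k d s x n * \<bar>z\<bar> ^ n / fact n \<ge> 0" for n
    unfolding Aa_def by (intro divide_nonneg_pos mult_nonneg_nonneg sum_nonneg) auto
  have FS: "(\<lambda>n. Aa k d s x n * \<bar>z\<bar> ^ n / fact n) summable_on UNIV"
    using summable_on_UNIV_nonneg_real_iff[of "\<lambda>n. Aa k d s x n * \<bar>z\<bar> ^ n / fact n"] A0 sumA by simp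
  have eqabs: "(\<lambda>n. \<bar>infsum (\<lambda>j. \<bar>g n j\<bar>) UNIV\<bar>) = (\<lambda>n. Aa k d s x n * \<bar>z\<bar> ^ n / fact n)"
  proof (rule ext)
    fix n
    have r: "infsum (\<lambda>j. \<bar>g n j\<bar>) UNIV = Aa k d s x n * \<bar>z\<bar> ^ n / fact n"
      using rownorm[of n] by (simp only: real_norm_def)
    show "\<bar>infsum (\<lambda>j. \<bar>g n j\<bar>) UNIV\<bar> = Aa k d s x n * \<bar>z\<bar> ^ n / fact n"
      by (simp only: r abs_of_nonneg[OF A0])
  qed
  have abs2: "(\<lambda>(n, j). g n j) abs_summable_on (Sigma UNIV (\<lambda>_. UNIV))"
  proof (subst abs_summable_on_Sigma_iff, intro conjI ballI)
    fix n :: nat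
    show "(\<lambda>j. (\<lambda>(n, j). g n j) (n, j)) abs_summable_on UNIV"
      using finsupp_summable(1)[of n "\<lambda>j. norm (g n j)"] gz by simp
  next
    show "(\<lambda>n. infsum (\<lambda>j. norm ((\<lambda>(n, j). g n j) (n, j))) UNIV) abs_summable_on UNIV"
      using eqabs FS by simp
  qed
  have S2: "(\<lambda>(n, j). g n j) summable_on (UNIV \<times> UNIV)" using abs_summable_summable[OF abs2] by simp
  have S2': "(\<lambda>(j, n). g n j) summable_on (UNIV \<times> UNIV)"
    using S2 summable_on_swap[of "\<lambda>(n, j). g n j" UNIV UNIV] by (simp add: case_prod_beta)
  have swap: "infsum (\<lambda>n. infsum (g n) UNIV) UNIV = infsum (\<lambda>j. infsum (\<lambda>n. g n j) UNIV) UNIV"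
    using infsum_swap_banach[OF S2] .
  have colsum: "infsum (\<lambda>n. g n j) UNIV = col j" for j
  proof -
    have "(\<lambda>n. g n j) summable_on UNIV"
      using summable_on_SigmaD1[of "\<lambda>j n. g n j" UNIV "\<lambda>_. UNIV" j] S2' by simp
    then have s1: "(\<lambda>n. g n j) sums infsum (\<lambda>n. g n j) UNIV" by (rule summable_on_sums)
    have "(\<lambda>n. (gam k d j * x ^ j) * (PP c s n j * z ^ n / fact n)) sums ((gam k d j * x ^ j) * (exp (s * z) * (exp (c * z) - 1) ^ j))"
      by (intro sums_mult PP_sums)
    moreover have "(\<lambda>n. (gam k d j * x ^ j) * (PP c s n j * z ^ n / fact n)) = (\<lambda>n. g n j)"
      unfolding g_def c_def hh_explicit[OF k d] by (rule ext) (simp add: algebra_simps)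
    ultimately have "(\<lambda>n. g n j) sums col j" unfolding col_def by (simp add: mult.assoc)
    then show ?thesis using s1 sums_unique2 by blast
  qed
  define tt where "tt = - x * (exp (c * z) - 1) / d"
  have tt1: "\<bar>tt\<bar> < 1" using t unfolding tt_def c_def by (simp add: abs_minus_commute)
  have colB: "col sums (exp (s * z) * (1 + tt) powr (- 1 / k))"
  proof -
    have "(\<lambda>j. exp (s * z) * (((- 1 / k) gchoose j) * tt ^ j)) sums (exp (s * z) * (1 + tt) powr (- 1 / k))"
      by (intro sums_mult gen_binomial_real tt1)
    moreover have "(\<lambda>j. exp (s * z) * (((- 1 / k) gchoose j) * tt ^ j)) = col"
    proof
      fix j
      have "tt ^ j = (- 1 / d) ^ j * x ^ j * (exp (c * z) - 1) ^ j"
      proof -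
        have tt': "tt = (- 1 / d) * x * (exp (c * z) - 1)" unfolding tt_def using d by (simp add: field_simps)
        show ?thesis by (simp only: tt' power_mult_distrib)
      qed
      then show "exp (s * z) * (((- 1 / k) gchoose j) * tt ^ j) = col j"
        unfolding col_def gam_def by (simp add: algebra_simps)
    qed
    ultimately show ?thesis by simp
  qed
  have colS: "col summable_on UNIV"
    using summable_on_Sigma_banach[of "\<lambda>j n. g n j" UNIV "\<lambda>_. UNIV"] S2' colsum by simp
  have "infsum col UNIV = exp (s * z) * (1 + tt) powr (- 1 / k)"
    using summable_on_sums[OF colS] colB sums_unique2 by blast
  moreover have rowS: "(\<lambda>n. infsum (g n) UNIV) summable_on UNIV"
    using summable_on_Sigma_banach[of "\<lambda>n j. g n j" UNIV "\<lambda>_. UNIV"] S2 by simp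
  ultimately have "(\<lambda>n. infsum (g n) UNIV) sums (exp (s * z) * (1 + tt) powr (- 1 / k))"
    using summable_on_sums[OF rowS] swap colsum by simp
  moreover have "1 + tt = 1 - x * (exp (2 * k * d * z) - 1) / d" unfolding tt_def c_def by simp
  ultimately show ?thesis using row by simp
qed


lemma value_eq:
  fixes x y u k z :: real
  assumes k: "k > 0" and d: "y - x \<noteq> 0" and q: "1 - x * (exp (2 * k * (y - x) * z) - 1) / (y - x) > 0"
  shows "((y - x) * exp (k * z * (y + u - 2 * x)) / (y - x * exp (2 * k * z * (y - x)))) powr (1 / k)
    = exp ((y + u - 2 * x) * z) * (1 - x * (exp (2 * k * (y - x) * z) - 1) / (y - x)) powr (- 1 / k)"
proof -
  define q where "q = 1 - x * (exp (2 * k * (y - x) * z) - 1) / (y - x)"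
  have dq: "y - x * exp (2 * k * z * (y - x)) = (y - x) * q"
    unfolding q_def using d by (simp add: field_simps mult_ac)
  have "(y - x) * exp (k * z * (y + u - 2 * x)) / (y - x * exp (2 * k * z * (y - x)))
      = exp (k * z * (y + u - 2 * x)) / q"
    unfolding dq using d by simp
  then have "((y - x) * exp (k * z * (y + u - 2 * x)) / (y - x * exp (2 * k * z * (y - x)))) powr (1 / k)
      = exp (k * z * (y + u - 2 * x)) powr (1 / k) / q powr (1 / k)"
    by (simp add: powr_divide)
  also have "exp (k * z * (y + u - 2 * x)) powr (1 / k) = exp ((y + u - 2 * x) * z)"
    unfolding exp_powr_real using k by simp
  also have "exp ((y + u - 2 * x) * z) / q powr (1 / k) = exp ((y + u - 2 * x) * z) * q powr (- 1 / k)"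
  proof -
    have "q powr (- 1 / k) = 1 / q powr (1 / k)" using powr_minus_divide[of q "1 / k"] by simp
    then show ?thesis by simp
  qed
  finally show ?thesis unfolding q_def .
qed

theorem lemma12:
  fixes x y u k :: real
  assumes "k > 0" and "x \<noteq> y"
  shows "\<exists>r>0. \<forall>z::real. \<bar>z\<bar> < r \<longrightarrow>
    (\<lambda>n. H n x y u k * z ^ n / fact n) sums
      (((y - x) * exp (k * z * (y + u - 2 * x)) / (y - x * exp (2 * k * z * (y - x)))) powr (1 / k))"
proof -
  note k = assms(1)
  define d where "d = y - x"
  define s where "s = y + u - 2 * x"
  have d0: "d \<noteq> 0" using assms(2) unfolding d_def by simp
  define C where "C = \<bar>s\<bar> + 2 * k * \<bar>d\<bar> + 2 * \<bar>x\<bar> + 2 * k * \<bar>x\<bar> + 1"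
  have C1: "C \<ge> 1" unfolding C_def using k by simp
  define phi where "phi z = x * (exp (2 * k * d * z) - 1) / d" for z
  have "isCont phi 0" unfolding phi_def by (intro continuous_intros) (use d0 in simp)
  then have lim: "phi \<midarrow>0\<rightarrow> phi 0" by (simp add: isCont_def)
  obtain r1 where r1: "r1 > 0" and r1p: "\<And>z. z \<noteq> 0 \<and> norm (z - 0) < r1 \<Longrightarrow> norm (phi z - phi 0) < 1"
    using LIM_D[OF lim, of 1] by auto
  have phi0: "phi 0 = 0" unfolding phi_def by simp
  define r where "r = min r1 (1 / C)"
  have r: "r > 0" unfolding r_def using r1 C1 by simp
  show ?thesis
  proof (intro exI[of _ r] conjI allI impI r)
    fix z :: real assume z: "\<bar>z\<bar> < r"
    have zC: "\<bar>z\<bar> * C < 1"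
    proof -
      have "\<bar>z\<bar> < 1 / C" using z unfolding r_def by simp
      then show ?thesis using C1 by (simp add: field_simps)
    qed
    have ph: "\<bar>phi z\<bar> < 1"
    proof (cases "z = 0")
      case True then show ?thesis using phi0 by simp
    next
      case False then show ?thesis using r1p[of z] z phi0 unfolding r_def by simp
    qed
    have ms: "(\<lambda>n. (\<Sum>j\<le>n. hh k d s n j * x ^ j) * z ^ n / fact n) sums
       (exp (s * z) * (1 - x * (exp (2 * k * d * z) - 1) / d) powr (- 1 / k))"
      by (rule main_sums[OF k d0]) (use zC ph in \<open>simp_all add: C_def phi_def\<close>)
    have "phi z < 1" using ph by arith
    then have q: "1 - x * (exp (2 * k * (y - x) * z) - 1) / (y - x) > 0"
      unfolding phi_def d_def by simp
    have "(\<lambda>n. H n x y u k * z ^ n / fact n) = (\<lambda>n. (\<Sum>j\<le>n. hh k d s n j * x ^ j) * z ^ n / fact n)"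
      unfolding H_poly d_def s_def ..
    then show "(\<lambda>n. H n x y u k * z ^ n / fact n) sums
      (((y - x) * exp (k * z * (y + u - 2 * x)) / (y - x * exp (2 * k * z * (y - x)))) powr (1 / k))"
      using ms value_eq[OF k _ q, of u] d0 unfolding d_def s_def by simp
  qed
qed

end
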